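(* Let $(X,d)$ be a proper metric space and $f:X\to\mathbb R_+=[0,\infty)$ a coarsely proper (not necessarily continuous) function. Then there is a continuous, proper, asymptotically Lipschitz function $q:X\to\mathbb R_+$ with $q\le f$ on $X$.
   Context: A metric space is proper if closed balls are compact. A function is coarsely proper if the preimage of every bounded set is bounded; proper if preimages of compact sets are compact; asymptotically Lipschitz if there are $\lambda,s\ge0$ with $|q(x)-q(x')|\le\lambda d(x,x')+s$. *)

theory Defs
  imports "HOL-Analysis.Analysis"
begin

definition proper_metric_space :: "'a::metric_space itself \<Rightarrow> bool" where
  "proper_metric_space _ \<longleftrightarrow> (\<forall>(x::'a) r. compact (cball x r))"

definition coarsely_proper :: "('a::metric_space \<Rightarrow> 'b::metric_space) \<Rightarrow> bool" where
  "coarsely_proper f \<longleftrightarrow> (\<forall>B. bounded B \<longrightarrow> bounded (f -` B))"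

definition proper_map :: "('a::topological_space \<Rightarrow> 'b::topological_space) \<Rightarrow> bool" where
  "proper_map f \<longleftrightarrow> (\<forall>K. compact K \<longrightarrow> compact (f -` K))"

definition asymptotically_lipschitz :: "('a::metric_space \<Rightarrow> real) \<Rightarrow> bool" where
  "asymptotically_lipschitz q \<longleftrightarrow>
     (\<exists>L s. L \<ge> 0 \<and> s \<ge> 0 \<and> (\<forall>x x'. \<bar>q x - q x'\<bar> \<le> L * dist x x' + s))"

end

theory Submission
  imports Defs
begin

theorem proposition4p5:
  fixes f :: "'a::metric_space \<Rightarrow> real"
  assumes "proper_metric_space TYPE('a)"
    and "\<forall>x. f x \<ge> 0"
    and "coarsely_proper f"
  shows "\<exists>q :: 'a \<Rightarrow> real. continuous_on UNIV q \<and> proper_map q \<and>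
           asymptotically_lipschitz q \<and> (\<forall>x. 0 \<le> q x \<and> q x \<le> f x)"
proof -
  define q where "q x = Inf ((\<lambda>y. f y + dist x y) ` UNIV)" for x
  have bdd: "bdd_below ((\<lambda>y. f y + dist x y) ` UNIV)" for x
    using assms(2) by (intro bdd_belowI[of _ 0]) (auto intro: add_nonneg_nonneg)
  have le: "q x \<le> f y + dist x y" for x y
    unfolding q_def by (rule cInf_lower[OF _ bdd]) auto
  have ge0: "0 \<le> q x" for x
    unfolding q_def using assms(2) by (intro cINF_greatest) (auto intro: add_nonneg_nonneg)
  have qf: "q x \<le> f x" for x using le[of x x] by simp
  have lip1: "q x \<le> q x' + dist x x'" for x x'
  proof -
    have "q x - dist x x' \<le> q x'"
      unfolding q_def[of x']
    proof (rule cINF_greatest)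
      fix y
      have "q x \<le> f y + dist x y" by (rule le)
      also have "\<dots> \<le> f y + dist x' y + dist x x'" using dist_triangle[of x y x'] by (simp add: dist_commute)
      finally show "q x - dist x x' \<le> f y + dist x' y" by simp
    qed simp
    thus ?thesis by simp
  qed
  have lip: "\<bar>q x - q x'\<bar> \<le> 1 * dist x x' + 0" for x x'
    using lip1[of x x'] lip1[of x' x] by (simp add: dist_commute abs_le_iff)
  have lo: "lipschitz_on 1 UNIV q"
    unfolding lipschitz_on_def using lip by (simp add: dist_real_def)
  have cont: "continuous_on UNIV q"
    using lipschitz_on_continuous_on[OF lo] .
  have bq: "bounded (q -` cball 0 n)" for n
  proof -
    have "bounded (f -` cball 0 (n+1))"
      using assms(3) unfolding coarsely_proper_def by auto
    then obtain a b where ab: "\<And>y. y \<in> f -` cball 0 (n+1) \<Longrightarrow> dist a y \<le> b"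
      unfolding bounded_def by blast
    have "dist a x \<le> b + (n+1)" if "x \<in> q -` cball 0 n" for x
    proof -
      have "q x \<le> n" using that ge0[of x] by (simp add: dist_real_def)
      hence "Inf ((\<lambda>y. f y + dist x y) ` UNIV) < n + 1" unfolding q_def by simp
      then obtain z where z: "z \<in> (\<lambda>y. f y + dist x y) ` UNIV" "z < n+1"
        using cInf_lessD[of "(\<lambda>y. f y + dist x y) ` UNIV"] by blast
      then obtain y where y: "f y + dist x y < n + 1" by auto
      have fy0: "0 \<le> f y" using assms(2) by blast
      have "f y \<le> n+1" using y zero_le_dist[of x y] by linarith
      note this fy0
      hence "dist a y \<le> b" by (intro ab) (simp add: dist_real_def)
      moreover have "dist x y \<le> n+1" using y fy0 by linarith
      moreover have "dist a x \<le> dist a y + dist y x" by (rule dist_triangle)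
      moreover have "dist y x = dist x y" by (rule dist_commute)
      ultimately show ?thesis by linarith
    qed
    thus ?thesis unfolding bounded_def by (intro exI[of _ a] exI[of _ "b + (n+1)"]) blast
  qed
  have pm: "proper_map q"
    unfolding proper_map_def
  proof (intro allI impI)
    fix K :: "real set" assume K: "compact K"
    obtain n where n0: "\<forall>x\<in>K. norm x \<le> n" using compact_imp_bounded[OF K] unfolding bounded_iff by blast
    have n: "K \<subseteq> cball 0 n" using n0 by (auto simp: dist_real_def)
    have "q -` K \<subseteq> q -` cball 0 n" using n by blast
    hence "bounded (q -` K)" using bounded_subset[OF bq[of n]] by blast
    then obtain x0 r where sub: "q -` K \<subseteq> cball x0 r" unfolding bounded_subset_cball by blast
    have cl: "closed (q -` K)"
      using continuous_closed_vimage[of K q] cont compact_imp_closed[OF K]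
      by (simp add: continuous_on_eq_continuous_at)
    have "compact (cball x0 r)" using assms(1) unfolding proper_metric_space_def by blast
    thus "compact (q -` K)" using compact_Int_closed[OF _ cl] sub
      by (metis inf.absorb2)
  qed
  have "asymptotically_lipschitz q"
    unfolding asymptotically_lipschitz_def using lip by (intro exI[of _ 1] exI[of _ 0]) auto
  thus ?thesis using cont pm ge0 qf by blast
qed

end
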